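(* Let $G$ be a simple graph, $k\ge 1$, and let $D$ be a $k$-optimal set in $G$. Then $G$ has a subgraph $M$ of maximum degree at most $k$ such that $d_M(v) = k$ for all $v \in V(G)-D$.
   Context: A vertex set $D$ is $k$-dependent if $G[D]$ has maximum degree at most $k-1$. For $D\subseteq V(G)$, $\phi_k(D)=k|D|-|E(G[D])|$ and $\phi_k(G)=\max_{D\subseteq V(G)}\phi_k(D)$. A $k$-optimal set is a $k$-dependent set $D$ with $\phi_k(D)=\phi_k(G)$. $d_M(v)$ is the degree of $v$ in $M$. *)

theory Defs
  imports Main
begin

definition simple_graph :: "'a set \<Rightarrow> 'a set set \<Rightarrow> bool" where
  "simple_graph V E \<longleftrightarrow> finite V \<and> (\<forall>e\<in>E. e \<subseteq> V \<and> card e = 2)"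

definition induced_edges :: "'a set set \<Rightarrow> 'a set \<Rightarrow> 'a set set" where
  "induced_edges E D = {e \<in> E. e \<subseteq> D}"

definition degree :: "'a set set \<Rightarrow> 'a \<Rightarrow> nat" where
  "degree F v = card {e \<in> F. v \<in> e}"

definition k_dependent :: "'a set \<Rightarrow> 'a set set \<Rightarrow> nat \<Rightarrow> 'a set \<Rightarrow> bool" where
  "k_dependent V E k D \<longleftrightarrow> D \<subseteq> V \<and> (\<forall>v\<in>D. degree (induced_edges E D) v \<le> k - 1)"

definition phi :: "'a set set \<Rightarrow> nat \<Rightarrow> 'a set \<Rightarrow> int" where
  "phi E k D = int k * int (card D) - int (card (induced_edges E D))"

definition phi_graph :: "'a set \<Rightarrow> 'a set set \<Rightarrow> nat \<Rightarrow> int" where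
  "phi_graph V E k = Max (phi E k ` Pow V)"

definition k_optimal :: "'a set \<Rightarrow> 'a set set \<Rightarrow> nat \<Rightarrow> 'a set \<Rightarrow> bool" where
  "k_optimal V E k D \<longleftrightarrow> k_dependent V E k D \<and> phi E k D = phi_graph V E k"

end

theory Submission imports Defs begin
definition phic :: "'a set set \<Rightarrow> ('a \<Rightarrow> nat) \<Rightarrow> 'a set \<Rightarrow> int" where
  "phic E c S = (\<Sum>x\<in>S. int (c x)) - int (card (induced_edges E S))"
definition ecnt :: "'a set set \<Rightarrow> 'a set \<Rightarrow> 'a \<Rightarrow> nat" where
  "ecnt E X w = card {a\<in>X. {a,w} \<in> E}"
definition gsum :: "'a set set \<Rightarrow> ('a \<Rightarrow> nat) \<Rightarrow> 'a set \<Rightarrow> 'a set \<Rightarrow> nat" where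
  "gsum E c D X = (\<Sum>w\<in>D. min (c w) (ecnt E X w))"
definition bip :: "'a set \<Rightarrow> 'a set \<Rightarrow> 'a set set" where
  "bip A D = {{a,w} | a w. a \<in> A \<and> w \<in> D}"

lemma degree_empty[simp]: "degree {} v = 0" by (simp add: degree_def)

lemma degree_Un: "finite M1 \<Longrightarrow> finite M2 \<Longrightarrow> M1 \<inter> M2 = {} \<Longrightarrow>
   degree (M1 \<union> M2) v = degree M1 v + degree M2 v"
proof -
  assume a: "finite M1" "finite M2" "M1 \<inter> M2 = {}"
  have "{e \<in> M1 \<union> M2. v \<in> e} = {e\<in>M1. v\<in>e} \<union> {e\<in>M2. v\<in>e}" by auto
  moreover have "card ({e\<in>M1. v\<in>e} \<union> {e\<in>M2. v\<in>e}) = card {e\<in>M1. v\<in>e} + card {e\<in>M2. v\<in>e}"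
    using a by (intro card_Un_disjoint) auto
  ultimately show ?thesis by (simp add: degree_def)
qed

lemma degree_insert: "finite M \<Longrightarrow> e \<notin> M \<Longrightarrow>
   degree (insert e M) v = degree M v + (if v \<in> e then 1 else 0)"
proof -
  assume a: "finite M" "e \<notin> M"
  show ?thesis
  proof (cases "v \<in> e")
    case True
    then have "{x \<in> insert e M. v \<in> x} = insert e {x\<in>M. v \<in> x}" by auto
    then show ?thesis using a True by (simp add: degree_def)
  next
    case False
    then have "{x \<in> insert e M. v \<in> x} = {x\<in>M. v \<in> x}" by auto
    then show ?thesis using False by (simp add: degree_def)
  qed
qed

lemma degree_zero: "(\<forall>e\<in>M. v \<notin> e) \<Longrightarrow> degree M v = 0"
proof -
  assume "\<forall>e\<in>M. v \<notin> e"
  then have "{e\<in>M. v \<in> e} = {}" by auto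
  then show ?thesis unfolding degree_def by (metis card.empty)
qed

lemma bip_eq: "bip A D = (\<lambda>(a,w). {a,w}) ` (A \<times> D)"
  by (auto simp: bip_def)

lemma finite_bip: "finite A \<Longrightarrow> finite D \<Longrightarrow> finite (bip A D)"
  by (simp add: bip_eq)

lemma bip_mono: "A \<subseteq> A' \<Longrightarrow> bip A D \<subseteq> bip A' D"
  by (auto simp: bip_def)

lemma degree_bip_out: "M \<subseteq> bip A D \<Longrightarrow> x \<notin> A \<Longrightarrow> x \<notin> D \<Longrightarrow> degree M x = 0"
  by (rule degree_zero) (auto simp: bip_def)

lemma ecnt_mono: "finite X \<Longrightarrow> Z \<subseteq> X \<Longrightarrow> ecnt E Z w \<le> ecnt E X w"
  unfolding ecnt_def by (rule card_mono) auto

lemma ecnt_Un: "finite X \<Longrightarrow> finite Z \<Longrightarrow> X \<inter> Z = {} \<Longrightarrow> ecnt E (Z \<union> X) w = ecnt E Z w + ecnt E X w"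
proof -
  assume a: "finite X" "finite Z" "X \<inter> Z = {}"
  have "{a \<in> Z \<union> X. {a,w} \<in> E} = {a\<in>Z. {a,w}\<in>E} \<union> {a\<in>X. {a,w}\<in>E}" by auto
  moreover have "card ({a\<in>Z. {a,w}\<in>E} \<union> {a\<in>X. {a,w}\<in>E}) = card {a\<in>Z. {a,w}\<in>E} + card {a\<in>X. {a,w}\<in>E}"
    using a by (intro card_Un_disjoint) auto
  ultimately show ?thesis by (simp add: ecnt_def)
qed

lemma card_insert_le1: "finite S \<Longrightarrow> card (insert v S) \<le> card S + 1"
  by (simp add: card_insert_if)

lemma bip_bmatch:
  fixes D :: "'a set"
  assumes fD: "finite D"
  shows "\<And>A E c. finite A \<Longrightarrow> A \<inter> D = {} \<Longrightarrow> (\<Sum>a\<in>A. c a) = n \<Longrightarrow>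
     (\<forall>X\<subseteq>A. (\<Sum>x\<in>X. c x) \<le> gsum E c D X) \<Longrightarrow>
     \<exists>M. M \<subseteq> E \<and> M \<subseteq> bip A D \<and> (\<forall>a\<in>A. degree M a = c a) \<and> (\<forall>w\<in>D. degree M w \<le> c w)"
proof (induction n rule: less_induct)
  case (less n A E c)
  note fA = less.prems(1) and dis = less.prems(2) and nA = less.prems(3) and H = less.prems(4)
  show ?case
  proof (cases "\<exists>v\<in>A. 1 \<le> c v")
    case False
    then show ?thesis by (intro exI[of _ "{}"]) auto
  next
    case True
    then obtain v where v: "v \<in> A" "1 \<le> c v" by auto
    show ?thesis
    proof (cases "\<exists>X\<subseteq>A-{v}. 1 \<le> (\<Sum>x\<in>X. c x) \<and> gsum E c D X \<le> (\<Sum>x\<in>X. c x)")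
      case True
      then obtain X where X: "X \<subseteq> A - {v}" "1 \<le> (\<Sum>x\<in>X. c x)" "gsum E c D X \<le> (\<Sum>x\<in>X. c x)"
        by blast
      have XA: "X \<subseteq> A" using X(1) by auto
      have fX: "finite X" using XA fA finite_subset by auto
      have geq: "gsum E c D X = (\<Sum>x\<in>X. c x)" using X(3) H XA by (simp add: le_antisym)
      define c1 where "c1 = (\<lambda>x. if x\<in>D then min (c x) (ecnt E X x) else c x)"
      define c2 where "c2 = (\<lambda>x. if x\<in>D then c x - min (c x) (ecnt E X x) else c x)"
      have s1: "(\<Sum>x\<in>Z. c1 x) = (\<Sum>x\<in>Z. c x)" if "Z \<subseteq> A" for Z
        using that dis by (intro sum.cong) (auto simp: c1_def)
      have s2: "(\<Sum>x\<in>Z. c2 x) = (\<Sum>x\<in>Z. c x)" if "Z \<subseteq> A" for Z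
        using that dis by (intro sum.cong) (auto simp: c2_def)
      have split: "(\<Sum>a\<in>A. c a) = (\<Sum>x\<in>X. c x) + (\<Sum>x\<in>A-X. c x)"
        using fA XA by (metis add.commute sum.subset_diff)
      have "c v \<le> (\<Sum>x\<in>A-X. c x)" using v X(1) fA by (intro member_le_sum) auto
      then have lt1: "(\<Sum>x\<in>X. c x) < n" using split nA v(2) by linarith
      have lt2: "(\<Sum>x\<in>A-X. c x) < n" using split nA X(2) by linarith
      have H1: "\<forall>Z\<subseteq>X. (\<Sum>x\<in>Z. c1 x) \<le> gsum E c1 D Z"
      proof (intro allI impI)
        fix Z assume Z: "Z \<subseteq> X"
        have "gsum E c D Z = gsum E c1 D Z" unfolding gsum_def
          proof (intro sum.cong refl)
          fix x assume "x \<in> D"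
          have "ecnt E Z x \<le> ecnt E X x" by (rule ecnt_mono[OF fX Z])
          then show "min (c x) (ecnt E Z x) = min (c1 x) (ecnt E Z x)" using \<open>x \<in> D\<close>
            by (auto simp: c1_def min_def)
        qed
        moreover have "Z \<subseteq> A" using Z XA by auto
        ultimately show "(\<Sum>x\<in>Z. c1 x) \<le> gsum E c1 D Z" using H s1[of Z] by auto
      qed
      have H2: "\<forall>Z\<subseteq>A-X. (\<Sum>x\<in>Z. c2 x) \<le> gsum E c2 D Z"
      proof (intro allI impI)
        fix Z assume Z: "Z \<subseteq> A - X"
        have fZ: "finite Z" using Z fA finite_subset by auto
        have "Z \<union> X \<subseteq> A" using Z XA by auto
        then have "(\<Sum>x\<in>Z \<union> X. c x) \<le> gsum E c D (Z \<union> X)" using H by blast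
        moreover have "(\<Sum>x\<in>Z \<union> X. c x) = (\<Sum>x\<in>Z. c x) + (\<Sum>x\<in>X. c x)"
          using fZ fX Z by (intro sum.union_disjoint) auto
        moreover have "gsum E c D (Z \<union> X) \<le> gsum E c2 D Z + gsum E c D X"
        proof -
          have "gsum E c D (Z \<union> X) = (\<Sum>w\<in>D. min (c w) (ecnt E Z w + ecnt E X w))"
            proof -
            have "X \<inter> Z = {}" using Z by auto
            then show ?thesis unfolding gsum_def using ecnt_Un[OF fX fZ] by simp
          qed
          also have "\<dots> \<le> (\<Sum>w\<in>D. min (c2 w) (ecnt E Z w) + min (c w) (ecnt E X w))"
            by (intro sum_mono) (auto simp: c2_def)
          also have "\<dots> = gsum E c2 D Z + gsum E c D X"
            unfolding gsum_def by (simp add: sum.distrib)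
          finally show ?thesis .
        qed
        moreover have "(\<Sum>x\<in>Z. c2 x) = (\<Sum>x\<in>Z. c x)" using s2[of Z] Z by auto
        ultimately show "(\<Sum>x\<in>Z. c2 x) \<le> gsum E c2 D Z" using geq by linarith
      qed
      obtain M1 where M1: "M1 \<subseteq> E" "M1 \<subseteq> bip X D" "\<forall>a\<in>X. degree M1 a = c1 a" "\<forall>w\<in>D. degree M1 w \<le> c1 w"
      proof -
        have d1: "X \<inter> D = {}" using dis XA by auto
        have e1: "(\<Sum>a\<in>X. c1 a) = (\<Sum>x\<in>X. c x)" using s1[OF XA] .
        show ?thesis using less.IH[OF lt1 fX d1 e1 H1] by (elim exE conjE) (rule that; assumption)
      qed
      obtain M2 where M2: "M2 \<subseteq> E" "M2 \<subseteq> bip (A-X) D" "\<forall>a\<in>A-X. degree M2 a = c2 a" "\<forall>w\<in>D. degree M2 w \<le> c2 w"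
      proof -
        have d2: "(A-X) \<inter> D = {}" using dis by auto
        have f2: "finite (A-X)" using fA by auto
        have e2: "(\<Sum>a\<in>A-X. c2 a) = (\<Sum>x\<in>A-X. c x)" using s2 by auto
        show ?thesis using less.IH[OF lt2 f2 d2 e2 H2] by (elim exE conjE) (rule that; assumption)
      qed
      have fM1: "finite M1" using M1(2) finite_bip[OF fX fD] finite_subset by auto
      have fM2: "finite M2" using M2(2) finite_bip[OF _ fD, of "A-X"] fA finite_subset by auto
      have disj: "M1 \<inter> M2 = {}"
      proof -
        have "bip X D \<inter> bip (A-X) D = {}" using dis XA by (auto simp: bip_def doubleton_eq_iff)
        then show ?thesis using M1(2) M2(2) by auto
      qed
      have z1: "degree M1 a = 0" if "a \<in> A - X" for a
        using that dis by (intro degree_bip_out[OF M1(2)]) auto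
      have z2: "degree M2 a = 0" if "a \<in> X" for a
        using that dis XA by (intro degree_bip_out[OF M2(2)]) auto
      show ?thesis
      proof (intro exI[of _ "M1 \<union> M2"] conjI ballI)
        show "M1 \<union> M2 \<subseteq> E" using M1 M2 by auto
        show "M1 \<union> M2 \<subseteq> bip A D" using M1(2) M2(2) bip_mono[OF XA] bip_mono[of "A-X" A] by blast
      next
        fix a assume a: "a \<in> A"
        show "degree (M1 \<union> M2) a = c a"
        proof (cases "a \<in> X")
          case True
          then show ?thesis using degree_Un[OF fM1 fM2 disj] M1(3) z2 dis a by (auto simp: c1_def)
        next
          case False
          then show ?thesis using degree_Un[OF fM1 fM2 disj] M2(3) z1 dis a by (auto simp: c2_def)
        qed
      next
        fix w assume w: "w \<in> D"
        have "c1 w + c2 w = c w" using w by (simp add: c1_def c2_def)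
        then show "degree (M1 \<union> M2) w \<le> c w"
          using degree_Un[OF fM1 fM2 disj] M1(4) M2(4) w by (metis add_le_mono)
      qed
    next
      case False
      have slack: "(\<Sum>x\<in>X. c x) < gsum E c D X" if a: "X \<subseteq> A - {v}" and b: "1 \<le> (\<Sum>x\<in>X. c x)" for X
      proof (rule ccontr)
        assume "\<not> (\<Sum>x\<in>X. c x) < gsum E c D X"
        then have "gsum E c D X \<le> (\<Sum>x\<in>X. c x)" by simp
        then show False using False a b by blast
      qed
      have "{v} \<subseteq> A" using v by simp
      then have "(\<Sum>x\<in>{v}. c x) \<le> gsum E c D {v}" using H by blast
      then have pos: "0 < gsum E c D {v}" using v by simp
      have "\<exists>w\<in>D. 0 < min (c w) (ecnt E {v} w)"
      proof (rule ccontr)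
        assume "\<not> (\<exists>w\<in>D. 0 < min (c w) (ecnt E {v} w))"
        then have "\<forall>w\<in>D. min (c w) (ecnt E {v} w) = 0" by auto
        then have "gsum E c D {v} = 0" unfolding gsum_def by simp
        then show False using pos by simp
      qed
      then obtain w where w: "w \<in> D" "0 < min (c w) (ecnt E {v} w)" by blast
      have vwE: "{v,w} \<in> E"
      proof (rule ccontr)
        assume "{v,w} \<notin> E"
        then have "{a\<in>{v}. {a,w}\<in>E} = {}" by auto
        then have "ecnt E {v} w = 0" unfolding ecnt_def by (metis card.empty)
        then show False using w(2) by simp
      qed
      have cw: "1 \<le> c w" using w(2) by auto
      have vw: "v \<noteq> w" "v \<notin> D" "w \<notin> A" using v w dis by auto
      define c' where "c' = c(v := c v - 1, w := c w - 1)"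
      define E' where "E' = E - {{v,w}}"
      have cv': "c' v = c v - 1" using vw by (simp add: c'_def)
      have cw': "c' w = c w - 1" by (simp add: c'_def)
      have cO: "c' a = c a" if "a \<noteq> v" "a \<noteq> w" for a using that by (simp add: c'_def)
      have cA: "c' a = c a" if "a \<in> A" "a \<noteq> v" for a using that vw cO by blast
      have sv: "(\<Sum>x\<in>X. c' x) + (if v \<in> X then 1 else 0) = (\<Sum>x\<in>X. c x)" if "X \<subseteq> A" for X
      proof -
        have fX: "finite X" using that fA finite_subset by auto
        have e: "(\<Sum>x\<in>X-{v}. c' x) = (\<Sum>x\<in>X-{v}. c x)" using cA that by (intro sum.cong) auto
        show ?thesis
        proof (cases "v \<in> X")
          case True
          have r1: "(\<Sum>x\<in>X. c x) = c v + (\<Sum>x\<in>X-{v}. c x)" using sum.remove[OF fX True] .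
          have r2: "(\<Sum>x\<in>X. c' x) = c' v + (\<Sum>x\<in>X-{v}. c' x)" using sum.remove[OF fX True] .
          show ?thesis using True r1 r2 e cv' v(2) by simp
        next
          case False
          then have "(\<Sum>x\<in>X. c' x) = (\<Sum>x\<in>X. c x)" using cA that by (intro sum.cong) auto
          then show ?thesis using False by simp
        qed
      qed
      have gle: "gsum E c D X \<le> gsum E' c' D X + 1" if "X \<subseteq> A" for X
      proof -
        have fX: "finite X" using that fA finite_subset by auto
        have rest: "(\<Sum>u\<in>D-{w}. min (c u) (ecnt E X u)) = (\<Sum>u\<in>D-{w}. min (c' u) (ecnt E' X u))"
        proof (intro sum.cong refl)
          fix u assume u: "u \<in> D - {w}"
          have uv: "u \<noteq> v" "u \<noteq> w" using u vw by auto
          have "{a\<in>X. {a,u}\<in>E} = {a\<in>X. {a,u}\<in>E'}"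
          proof (intro Collect_cong conj_cong refl)
            fix a
            have "{a,u} \<noteq> {v,w}"
            proof
              assume eq: "{a,u} = {v,w}"
              have "u \<in> {a,u}" by simp
              then have "u \<in> {v,w}" by (simp only: eq)
              then show False using uv by simp
            qed
            then show "({a,u}\<in>E) = ({a,u}\<in>E')" by (simp add: E'_def)
          qed
          then have "ecnt E X u = ecnt E' X u" by (simp add: ecnt_def)
          then show "min (c u) (ecnt E X u) = min (c' u) (ecnt E' X u)" using cO[OF uv] by simp
        qed
        have "{a\<in>X. {a,w}\<in>E} \<subseteq> insert v {a\<in>X. {a,w}\<in>E'}"
        proof
          fix a assume a: "a \<in> {a\<in>X. {a,w}\<in>E}"
          show "a \<in> insert v {a\<in>X. {a,w}\<in>E'}"
          proof (cases "a = v")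
            case True then show ?thesis by simp
          next
            case False
            have "a \<noteq> w" using a that vw by auto
            have "{a,w} \<noteq> {v,w}"
            proof
              assume eq: "{a,w} = {v,w}"
              have "a \<in> {a,w}" by simp
              then have "a \<in> {v,w}" by (simp only: eq)
              then show False using False \<open>a \<noteq> w\<close> by simp
            qed
            then show ?thesis using a by (simp add: E'_def)
          qed
        qed
        then have "ecnt E X w \<le> card (insert v {a\<in>X. {a,w}\<in>E'})" unfolding ecnt_def
          using fX by (intro card_mono) auto
        also have "\<dots> \<le> ecnt E' X w + 1" unfolding ecnt_def
          by (rule card_insert_le1) (use fX in auto)
        finally have "min (c w) (ecnt E X w) \<le> min (c' w) (ecnt E' X w) + 1"
          using cw cw' by (simp add: min_def)
        moreover have "gsum E c D X = min (c w) (ecnt E X w) + (\<Sum>u\<in>D-{w}. min (c u) (ecnt E X u))"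
          unfolding gsum_def by (rule sum.remove[OF fD w(1)])
        moreover have "gsum E' c' D X = min (c' w) (ecnt E' X w) + (\<Sum>u\<in>D-{w}. min (c' u) (ecnt E' X u))"
          unfolding gsum_def by (rule sum.remove[OF fD w(1)])
        ultimately show ?thesis using rest by linarith
      qed
      have H': "\<forall>X\<subseteq>A. (\<Sum>x\<in>X. c' x) \<le> gsum E' c' D X"
      proof (intro allI impI)
        fix X assume X: "X \<subseteq> A"
        have HX: "(\<Sum>x\<in>X. c x) \<le> gsum E c D X" using H X by blast
        note s = sv[OF X] and g = gle[OF X]
        show "(\<Sum>x\<in>X. c' x) \<le> gsum E' c' D X"
        proof (cases "v \<in> X")
          case True
          then show ?thesis using s g HX by simp
        next
          case False
          then have XA: "X \<subseteq> A - {v}" using X by auto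
          show ?thesis
          proof (cases "1 \<le> (\<Sum>x\<in>X. c x)")
            case True
            then show ?thesis using slack[OF XA True] s g False by simp
          next
            case False
            then show ?thesis using s by simp
          qed
        qed
      qed
      have lt: "(\<Sum>x\<in>A. c' x) < n" using sv[of A] v(1) nA by simp
      obtain M' where M': "M' \<subseteq> E'" "M' \<subseteq> bip A D" "\<forall>a\<in>A. degree M' a = c' a" "\<forall>u\<in>D. degree M' u \<le> c' u"
        using less.IH[OF lt fA dis refl H'] by (elim exE conjE) (rule that; assumption)
      have fM': "finite M'" using M'(2) finite_bip[OF fA fD] finite_subset by auto
      have nin: "{v,w} \<notin> M'" using M'(1) by (auto simp: E'_def)
      show ?thesis
      proof (intro exI[of _ "insert {v,w} M'"] conjI ballI)
        show "insert {v,w} M' \<subseteq> E" using M'(1) vwE by (auto simp: E'_def)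
        show "insert {v,w} M' \<subseteq> bip A D" using M'(2) v w by (auto simp: bip_def)
      next
        fix a assume a: "a \<in> A"
        show "degree (insert {v,w} M') a = c a"
        proof (cases "a = v")
          case True
          then show ?thesis using degree_insert[OF fM' nin, of a] M'(3) a cv' v(2) by simp
        next
          case False
          then have "a \<noteq> w" using a vw by auto
          then show ?thesis using degree_insert[OF fM' nin, of a] M'(3) a cA[OF a] False by simp
        qed
      next
        fix u assume u: "u \<in> D"
        show "degree (insert {v,w} M') u \<le> c u"
        proof (cases "u = w")
          case True
          then show ?thesis using degree_insert[OF fM' nin, of u] M'(4) u cw' cw by fastforce
        next
          case False
          moreover have "u \<noteq> v" using u vw by auto
          ultimately show ?thesis using degree_insert[OF fM' nin, of u] M'(4) u cO[of u] by fastforce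
        qed
      qed
    qed
  qed
qed

lemma general:
  assumes fV: "finite V" and DV: "D \<subseteq> V"
  shows "\<And>E c. (\<forall>e\<in>E. e \<subseteq> V \<and> card e = 2) \<Longrightarrow> card E = m \<Longrightarrow>
     (\<forall>S\<subseteq>V. phic E c S \<le> phic E c D) \<Longrightarrow>
     \<exists>M\<subseteq>E. (\<forall>v\<in>V. degree M v \<le> c v) \<and> (\<forall>v\<in>V-D. degree M v = c v)"
proof (induction m rule: less_induct)
  case (less m E c)
  note Eg = less.prems(1) and cE = less.prems(2) and opt = less.prems(3)
  have fE: "finite E"
  proof (rule finite_subset)
    show "E \<subseteq> Pow V" using Eg by auto
    show "finite (Pow V)" using fV by simp
  qed
  have fD: "finite D" using DV fV finite_subset by auto
  show ?case
  proof (cases "\<exists>u v. {u,v}\<in>E \<and> u\<in>V-D \<and> v\<in>V-D \<and> u\<noteq>v \<and> 1 \<le> c u \<and> 1 \<le> c v")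
    case True
    then obtain u v where uv: "{u,v}\<in>E" "u\<in>V-D" "v\<in>V-D" "u\<noteq>v" "1 \<le> c u" "1 \<le> c v" by blast
    define c' where "c' = c(u := c u - 1, v := c v - 1)"
    define E' where "E' = E - {{u,v}}"
    have cu': "c' u = c u - 1" using uv(4) by (simp add: c'_def)
    have cv': "c' v = c v - 1" by (simp add: c'_def)
    have cO: "c' x = c x" if "x \<noteq> u" "x \<noteq> v" for x using that by (simp add: c'_def)
    have ic: "int (c' x) = int (c x) - (if x = u then 1 else 0) - (if x = v then 1 else 0)" for x
    proof (cases "x = u")
      case True then show ?thesis using cu' uv(4,5) by simp
    next
      case False
      then show ?thesis using cv' cO[OF False] uv(6) by (cases "x = v") simp_all
    qed
    have ltm: "card E' < m" unfolding E'_def using card_Diff1_less[OF fE uv(1)] cE by simp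
    have Eg': "\<forall>e\<in>E'. e \<subseteq> V \<and> card e = 2" using Eg by (auto simp: E'_def)
    have opt': "\<forall>S\<subseteq>V. phic E' c' S \<le> phic E' c' D"
    proof (intro allI impI)
      fix S assume SV: "S \<subseteq> V"
      have fS: "finite S" using SV fV finite_subset by auto
      have sS: "(\<Sum>x\<in>S. int (c' x)) = (\<Sum>x\<in>S. int (c x)) - (if u\<in>S then 1 else 0) - (if v\<in>S then 1 else 0)"
      proof -
        have "(\<Sum>x\<in>S. int (c' x)) = (\<Sum>x\<in>S. int (c x) - (if x = u then 1 else 0) - (if x = v then 1 else 0))"
          using ic by simp
        also have "\<dots> = (\<Sum>x\<in>S. int (c x)) - (\<Sum>x\<in>S. (if x = u then 1 else 0)) - (\<Sum>x\<in>S. (if x = v then 1 else 0))"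
          by (simp add: sum_subtractf)
        also have "\<dots> = (\<Sum>x\<in>S. int (c x)) - (if u\<in>S then 1 else 0) - (if v\<in>S then 1 else 0)"
          using fS by (simp add: sum.delta)
        finally show ?thesis .
      qed
      have sD: "(\<Sum>x\<in>D. int (c' x)) = (\<Sum>x\<in>D. int (c x))"
      proof (intro sum.cong refl)
        fix x assume "x \<in> D"
        then have "x \<noteq> u" "x \<noteq> v" using uv(2,3) by auto
        then show "int (c' x) = int (c x)" using cO by simp
      qed
      have iD: "induced_edges E' D = induced_edges E D"
        using uv(2) by (auto simp: induced_edges_def E'_def)
      have iS: "card (induced_edges E S) \<le> card (induced_edges E' S) + (if u\<in>S \<and> v\<in>S then 1 else 0)"
      proof (cases "u\<in>S \<and> v\<in>S")
        case True
        have "induced_edges E S \<subseteq> insert {u,v} (induced_edges E' S)"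
          by (auto simp: induced_edges_def E'_def)
        moreover have "finite (induced_edges E' S)" using fE by (simp add: induced_edges_def E'_def)
        ultimately have "card (induced_edges E S) \<le> card (insert {u,v} (induced_edges E' S))"
          by (intro card_mono) auto
        also have "\<dots> \<le> card (induced_edges E' S) + 1"
          by (rule card_insert_le1) (use fE in \<open>simp add: induced_edges_def E'_def\<close>)
        finally show ?thesis using True by simp
      next
        case False
        have "induced_edges E S = induced_edges E' S"
          using False by (auto simp: induced_edges_def E'_def)
        then show ?thesis by simp
      qed
      have "phic E' c' S \<le> phic E c S"
        unfolding phic_def using sS iS by (auto split: if_splits)
      also have "\<dots> \<le> phic E c D" using opt SV by blast
      also have "\<dots> = phic E' c' D" unfolding phic_def using sD iD by simp
      finally show "phic E' c' S \<le> phic E' c' D" .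
    qed
    obtain M' where M': "M' \<subseteq> E'" "\<forall>x\<in>V. degree M' x \<le> c' x" "\<forall>x\<in>V-D. degree M' x = c' x"
      using less.IH[OF ltm Eg' refl opt'] by blast
    have fM': "finite M'" using M'(1) fE finite_subset by (auto simp: E'_def)
    have nin: "{u,v} \<notin> M'" using M'(1) by (auto simp: E'_def)
    have dg: "degree (insert {u,v} M') x = degree M' x + (if x = u \<or> x = v then 1 else 0)" for x
      using degree_insert[OF fM' nin, of x] by simp
    show ?thesis
    proof (intro exI[of _ "insert {u,v} M'"] conjI ballI)
      show "insert {u,v} M' \<subseteq> E" using M'(1) uv(1) by (auto simp: E'_def)
    next
      fix x assume x: "x \<in> V"
      show "degree (insert {u,v} M') x \<le> c x"
      proof (cases "x = u \<or> x = v")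
        case True
        then show ?thesis using dg[of x] M'(3) uv cu' cv' by auto
      next
        case False
        then show ?thesis using dg[of x] M'(2) x cO[of x] by auto
      qed
    next
      fix x assume x: "x \<in> V - D"
      show "degree (insert {u,v} M') x = c x"
      proof (cases "x = u \<or> x = v")
        case True
        then show ?thesis using dg[of x] M'(3) uv cu' cv' by auto
      next
        case False
        then show ?thesis using dg[of x] M'(3) x cO[of x] by auto
      qed
    qed
  next
    case False
    define A where "A = {x\<in>V-D. 1 \<le> c x}"
    have fA: "finite A" using fV by (simp add: A_def)
    have disA: "A \<inter> D = {}" by (auto simp: A_def)
    have H: "\<forall>X\<subseteq>A. (\<Sum>x\<in>X. c x) \<le> gsum E c D X"
    proof (intro allI impI)
      fix X assume XA: "X \<subseteq> A"
      have fX: "finite X" using XA fA finite_subset by auto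
      define Y where "Y = {w\<in>D. c w \<le> ecnt E X w}"
      define S where "S = X \<union> (D - Y)"
      have YD: "Y \<subseteq> D" by (auto simp: Y_def)
      have XD: "X \<inter> D = {}" using XA disA by auto
      have SV: "S \<subseteq> V" using XA DV by (auto simp: S_def A_def)
      have le: "phic E c S \<le> phic E c D" using opt SV by blast
      have sS: "(\<Sum>x\<in>S. int (c x)) = (\<Sum>x\<in>X. int (c x)) + (\<Sum>x\<in>D-Y. int (c x))"
        unfolding S_def using fX fD XD by (intro sum.union_disjoint) auto
      have sD: "(\<Sum>x\<in>D. int (c x)) = (\<Sum>x\<in>D-Y. int (c x)) + (\<Sum>x\<in>Y. int (c x))"
        using sum.subset_diff[OF YD fD] .
      define U where "U = (\<Union>w\<in>D-Y. (\<lambda>a. {a,w}) ` {a\<in>X. {a,w}\<in>E})"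
      have incl: "induced_edges E S \<subseteq> induced_edges E (D-Y) \<union> U"
      proof
        fix e assume e: "e \<in> induced_edges E S"
        then have eE: "e \<in> E" and eS: "e \<subseteq> S" by (auto simp: induced_edges_def)
        have "card e = 2" using Eg eE by blast
        then obtain x y where xy: "e = {x,y}" "x \<noteq> y" by (auto simp: card_2_iff)
        have xS: "x \<in> S" and yS: "y \<in> S" using eS xy by auto
        show "e \<in> induced_edges E (D-Y) \<union> U"
        proof (cases "x \<in> X")
          case xX: True
          show ?thesis
          proof (cases "y \<in> X")
            case True
            have "x \<in> V-D" "y \<in> V-D" "1 \<le> c x" "1 \<le> c y" using xX True XA by (auto simp: A_def)
            then have False using False xy eE by blast
            then show ?thesis ..
          next
            case yX: False
            then have yDY: "y \<in> D - Y" using yS by (auto simp: S_def)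
            have "x \<in> {a\<in>X. {a,y}\<in>E}" using xX eE xy by simp
            then have "e \<in> (\<lambda>a. {a,y}) ` {a\<in>X. {a,y}\<in>E}" using xy by blast
            then show ?thesis using yDY by (auto simp: U_def)
          qed
        next
          case xX: False
          then have xDY: "x \<in> D - Y" using xS by (auto simp: S_def)
          show ?thesis
          proof (cases "y \<in> X")
            case True
            have "e = {y,x}" using xy by auto
            moreover have "y \<in> {a\<in>X. {a,x}\<in>E}" using True eE calculation by simp
            ultimately have "e \<in> (\<lambda>a. {a,x}) ` {a\<in>X. {a,x}\<in>E}" by blast
            then show ?thesis using xDY by (auto simp: U_def)
          next
            case False
            then have "y \<in> D - Y" using yS by (auto simp: S_def)
            then have "e \<subseteq> D - Y" using xDY xy by auto
            then show ?thesis using eE by (auto simp: induced_edges_def)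
          qed
        qed
      qed
      have fR: "finite (induced_edges E (D-Y) \<union> U)"
      proof (rule finite_subset[OF _ fE])
        show "induced_edges E (D-Y) \<union> U \<subseteq> E" by (auto simp: induced_edges_def U_def)
      qed
      have cU: "card U \<le> (\<Sum>w\<in>D-Y. ecnt E X w)"
      proof -
        have "card U \<le> (\<Sum>w\<in>D-Y. card ((\<lambda>a. {a,w}) ` {a\<in>X. {a,w}\<in>E}))"
          unfolding U_def using fD by (intro card_UN_le) simp
        also have "\<dots> \<le> (\<Sum>w\<in>D-Y. ecnt E X w)"
          unfolding ecnt_def using fX by (intro sum_mono card_image_le) simp
        finally show ?thesis .
      qed
      have cDY: "card (induced_edges E (D-Y)) \<le> card (induced_edges E D)"
        using fE by (intro card_mono) (auto simp: induced_edges_def)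
      have cS: "card (induced_edges E S) \<le> card (induced_edges E D) + (\<Sum>w\<in>D-Y. ecnt E X w)"
      proof -
        have "card (induced_edges E S) \<le> card (induced_edges E (D-Y) \<union> U)"
          by (rule card_mono[OF fR incl])
        also have "\<dots> \<le> card (induced_edges E (D-Y)) + card U" by (rule card_Un_le)
        finally show ?thesis using cU cDY by linarith
      qed
      have "int (\<Sum>x\<in>X. c x) \<le> int (\<Sum>x\<in>Y. c x) + int (\<Sum>w\<in>D-Y. ecnt E X w)"
      proof -
        have "(\<Sum>x\<in>S. int (c x)) - int (card (induced_edges E S)) \<le> (\<Sum>x\<in>D. int (c x)) - int (card (induced_edges E D))"
          using le by (simp add: phic_def)
        moreover have "int (card (induced_edges E S)) \<le> int (card (induced_edges E D)) + int (\<Sum>w\<in>D-Y. ecnt E X w)"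
          using cS by linarith
        ultimately show ?thesis using sS sD by (simp add: of_nat_sum)
      qed
      then have ineq: "(\<Sum>x\<in>X. c x) \<le> (\<Sum>x\<in>Y. c x) + (\<Sum>w\<in>D-Y. ecnt E X w)" by linarith
      have "gsum E c D X = (\<Sum>w\<in>D-Y. min (c w) (ecnt E X w)) + (\<Sum>w\<in>Y. min (c w) (ecnt E X w))"
        unfolding gsum_def using sum.subset_diff[OF YD fD] .
      also have "(\<Sum>w\<in>D-Y. min (c w) (ecnt E X w)) = (\<Sum>w\<in>D-Y. ecnt E X w)"
        by (intro sum.cong) (auto simp: Y_def)
      also have "(\<Sum>w\<in>Y. min (c w) (ecnt E X w)) = (\<Sum>w\<in>Y. c w)"
        by (intro sum.cong) (auto simp: Y_def)
      finally show "(\<Sum>x\<in>X. c x) \<le> gsum E c D X" using ineq by linarith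
    qed
    obtain M where M: "M \<subseteq> E" "M \<subseteq> bip A D" "\<forall>a\<in>A. degree M a = c a" "\<forall>w\<in>D. degree M w \<le> c w"
      using bip_bmatch[OF fD fA disA refl H] by (elim exE conjE) (rule that; assumption)
    show ?thesis
    proof (intro exI[of _ M] conjI ballI)
      show "M \<subseteq> E" by (rule M(1))
    next
      fix x assume x: "x \<in> V"
      show "degree M x \<le> c x"
      proof (cases "x \<in> A")
        case True then show ?thesis using M(3) by simp
      next
        case nA: False
        show ?thesis
        proof (cases "x \<in> D")
          case True then show ?thesis using M(4) by simp
        next
          case False then show ?thesis using degree_bip_out[OF M(2) nA False] by simp
        qed
      qed
    next
      fix x assume x: "x \<in> V - D"
      show "degree M x = c x"
      proof (cases "x \<in> A")
        case True then show ?thesis using M(3) by simp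
      next
        case False
        then have "c x = 0" using x by (auto simp: A_def)
        moreover have "degree M x = 0" using degree_bip_out[OF M(2) False] x by simp
        ultimately show ?thesis by simp
      qed
    qed
  qed
qed

theorem mainTheorem11:
  fixes V :: "'a set" and E :: "'a set set" and k :: nat and D :: "'a set"
  assumes "simple_graph V E" and "k \<ge> 1" and "k_optimal V E k D"
  shows "\<exists>M. M \<subseteq> E \<and> (\<forall>v\<in>V. degree M v \<le> k) \<and> (\<forall>v\<in>V - D. degree M v = k)"
proof -
  have fV: "finite V" and Eg: "\<forall>e\<in>E. e \<subseteq> V \<and> card e = 2"
    using assms(1) by (auto simp: simple_graph_def)
  have DV: "D \<subseteq> V" and pD: "phi E k D = Max (phi E k ` Pow V)"
    using assms(3) by (auto simp: k_optimal_def k_dependent_def phi_graph_def)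
  have opt: "\<forall>S\<subseteq>V. phic E (\<lambda>_. k) S \<le> phic E (\<lambda>_. k) D"
  proof (intro allI impI)
    fix S assume SV: "S \<subseteq> V"
    have eq: "phic E (\<lambda>_. k) T = phi E k T" if "T \<subseteq> V" for T
    proof -
      have "finite T" using that fV finite_subset by auto
      then show ?thesis by (simp add: phic_def phi_def mult.commute)
    qed
    have "phi E k S \<le> Max (phi E k ` Pow V)" using SV fV by (intro Max_ge) auto
    then show "phic E (\<lambda>_. k) S \<le> phic E (\<lambda>_. k) D" using eq[OF SV] eq[OF DV] pD by simp
  qed
  obtain M where "M \<subseteq> E" "\<forall>v\<in>V. degree M v \<le> k" "\<forall>v\<in>V-D. degree M v = k"
    using general[OF fV DV Eg refl opt] by blast
  then show ?thesis by blast
qed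

end
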